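(* Let $k \ge 4$, $d \ge k$, and let $A \in \mathbb{R}^{k \times d}$ satisfy $AA^\top = I_k$. Define $f_A(x) = Ax/\|Ax\|_2$ (assume $Ax \neq 0$ almost surely under the prior). Let $\pi$ be a prior on $X \in \mathbb{R}^d$ such that the push-forward $\pi_f$ of $\pi$ under $f_A$ (a distribution on the unit sphere $\mathbb{S}^{k-1}$) satisfies $\log \frac{d\pi_f}{d\pi_0}(v) \le \rho_0$ for all $v \in \mathbb{S}^{k-1}$, where $\pi_0$ is the uniform distribution on $\mathbb{S}^{k-1}$ and $\rho_0\in[0,\infty)$. Let $X\to W\to Z=M(W)$ with $M$ $\varepsilon$-locally differentially private (in the density sense: $M(w)$ has density $q(\cdot\mid w)$ w.r.t. a common $\sigma$-finite measure with $q(z\mid w)\le e^{\varepsilon}q(z\mid w')$ for all $z,w,w'$). Use the loss $L_{\rm rec}(u,v) = \|u/\|u\|_2 - v/\|v\|_2\|_2$ for $v \ne 0$ and $L_{\rm rec}(u,0)=\sqrt2$. Then for $a \in [0,1)$, $M$ is $(\sqrt{2-2a}, p(a), f_A)$-protected against reconstruction for $L_{\rm rec}$, where \[ p(a) = \begin{cases} \exp\!\big(\varepsilon + \rho_0 + \tfrac{k}{2}\log(1-a^2)\big) & \text{if } a \in [0, 1/\sqrt2],\\[2pt] \exp\!\big(\varepsilon + \rho_0 + \tfrac{k-1}{2}\log(1-a^2) - \log(2a\sqrt k)\big) & \text{if } a \in [\sqrt{2/k}, 1). \end{cases} \]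
   Context: A mechanism $M$ is $(\alpha,p,f)$-protected against reconstruction for loss $L_{\rm rec}$ if for every measurable estimator $\widehat v:\mathcal Z\to\mathbb R^k$, $\sup_z \mathbb P(L_{\rm rec}(f(X),\widehat v(z))\le\alpha \mid Z=z)\le p$, the probability being under the prior $\pi$ on $X$ and the randomness of the chain $X\to W\to Z$. *)

theory Defs
  imports "HOL-Probability.Probability"
begin

definition dirmap :: "real^'d^'k \<Rightarrow> real^'d \<Rightarrow> real^'k" where
  "dirmap A x = (A *v x) /\<^sub>R norm (A *v x)"

text \<open>Uniform (normalised surface) distribution on the unit sphere of real^'k,
  realised as the cone measure: push-forward of the uniform distribution on the
  unit ball under y |-> y / norm y.\<close>
definition sphere_unif :: "(real^'k) measure" where
  "sphere_unif = distr (uniform_measure lborel (ball 0 1)) borel (\<lambda>y. y /\<^sub>R norm y)"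

definition Lrec :: "real^'k \<Rightarrow> real^'k \<Rightarrow> real" where
  "Lrec u v = (if v = 0 then sqrt 2 else norm (u /\<^sub>R norm u - v /\<^sub>R norm v))"

text \<open>Likelihood of output z given input x in the chain X -> W -> Z:
  K x is the law of W given X = x, q w z the density of M(w) w.r.t. a reference measure.\<close>
definition lik :: "('x \<Rightarrow> 'w measure) \<Rightarrow> ('w \<Rightarrow> 'z \<Rightarrow> real) \<Rightarrow> 'x \<Rightarrow> 'z \<Rightarrow> ennreal" where
  "lik K q x z = (\<integral>\<^sup>+ w. ennreal (q w z) \<partial>K x)"

definition post :: "'x measure \<Rightarrow> ('x \<Rightarrow> 'w measure) \<Rightarrow> ('w \<Rightarrow> 'z \<Rightarrow> real) \<Rightarrow> 'z \<Rightarrow> 'x set \<Rightarrow> ennreal" where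
  "post pr K q z B =
     (\<integral>\<^sup>+ x. indicator B x * lik K q x z \<partial>pr) / (\<integral>\<^sup>+ x. lik K q x z \<partial>pr)"

definition protected_rec ::
  "'x measure \<Rightarrow> ('x \<Rightarrow> 'w measure) \<Rightarrow> ('w \<Rightarrow> 'z \<Rightarrow> real) \<Rightarrow> 'z measure \<Rightarrow>
   ('x \<Rightarrow> 'v::topological_space) \<Rightarrow> ('v \<Rightarrow> 'v \<Rightarrow> real) \<Rightarrow> real \<Rightarrow> real \<Rightarrow> bool" where
  "protected_rec pr K q \<mu> f L \<alpha> p \<longleftrightarrow>
     (\<forall>vh \<in> \<mu> \<rightarrow>\<^sub>M (borel :: 'v measure). \<forall>z \<in> space \<mu>.
        post pr K q z {x \<in> space pr. L (f x) (vh z) \<le> \<alpha>} \<le> ennreal p)"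

end

theory Submission
  imports Defs
begin



lemma linear_measure_const:
  fixes f :: "real^'n \<Rightarrow> real^'n"
  assumes "linear f"
  shows "\<exists>c\<ge>0. \<forall>S \<in> lmeasurable. f ` S \<in> lmeasurable \<and> measure lebesgue (f ` S) = c * measure lebesgue S"
proof (rule induct_linear_elementary[where P="\<lambda>f. \<exists>c\<ge>0. \<forall>S \<in> lmeasurable. f ` S \<in> lmeasurable \<and> measure lebesgue (f ` S) = c * measure lebesgue S", OF assms])
  fix f g :: "real^'n \<Rightarrow> real^'n"
  assume "\<exists>c\<ge>0. \<forall>S \<in> lmeasurable. f ` S \<in> lmeasurable \<and> measure lebesgue (f ` S) = c * measure lebesgue S"
     and "\<exists>c\<ge>0. \<forall>S \<in> lmeasurable. g ` S \<in> lmeasurable \<and> measure lebesgue (g ` S) = c * measure lebesgue S"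
  then obtain cf cg where cf: "cf \<ge> 0" "\<And>S. S \<in> lmeasurable \<Longrightarrow> f ` S \<in> lmeasurable \<and> measure lebesgue (f ` S) = cf * measure lebesgue S"
    and cg: "cg \<ge> 0" "\<And>S. S \<in> lmeasurable \<Longrightarrow> g ` S \<in> lmeasurable \<and> measure lebesgue (g ` S) = cg * measure lebesgue S"
    by metis
  show "\<exists>c\<ge>0. \<forall>S \<in> lmeasurable. (f \<circ> g) ` S \<in> lmeasurable \<and> measure lebesgue ((f \<circ> g) ` S) = c * measure lebesgue S"
  proof (intro exI[of _ "cf * cg"] conjI ballI)
    show "0 \<le> cf * cg" using cf cg by simp
    fix S :: "(real^'n) set" assume S: "S \<in> lmeasurable"
    have gS: "g ` S \<in> lmeasurable" and mg: "measure lebesgue (g ` S) = cg * measure lebesgue S"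
      using cg(2)[OF S] by auto
    have fgS: "f ` g ` S \<in> lmeasurable" and mf: "measure lebesgue (f ` g ` S) = cf * measure lebesgue (g ` S)"
      using cf(2)[OF gS] by auto
    show "(f \<circ> g) ` S \<in> lmeasurable" unfolding image_comp[symmetric] by (rule fgS)
    show "measure lebesgue ((f \<circ> g) ` S) = cf * cg * measure lebesgue S"
      unfolding image_comp[symmetric] mf mg by simp
  qed
next
  fix f :: "real^'n \<Rightarrow> real^'n" and i
  assume "linear f" and 0: "\<And>x. f x $ i = 0"
  then have "\<not> inj f"
    by (metis (full_types) linear_injective_imp_surjective one_neq_zero surjE vec_component)
  show "\<exists>c\<ge>0. \<forall>S \<in> lmeasurable. f ` S \<in> lmeasurable \<and> measure lebesgue (f ` S) = c * measure lebesgue S"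
  proof (intro exI[of _ 0] conjI ballI)
    fix S :: "(real^'n) set" assume "S \<in> lmeasurable"
    show "f ` S \<in> lmeasurable"
      using lmeasurable_iff_indicator_has_integral \<open>linear f\<close> \<open>\<not> inj f\<close> negligible_UNIV negligible_linear_singular_image by blast
    show "measure lebesgue (f ` S) = 0 * measure lebesgue S"
      by (simp, meson \<open>\<not> inj f\<close> \<open>linear f\<close> negligible_imp_measure0 negligible_linear_singular_image)
  qed simp
next
  fix c :: "'n \<Rightarrow> real"
  show "\<exists>d\<ge>0. \<forall>S \<in> lmeasurable. (\<lambda>a. \<chi> i. c i * a $ i) ` S \<in> lmeasurable \<and> measure lebesgue ((\<lambda>a. \<chi> i. c i * a $ i) ` S) = d * measure lebesgue S"
    by (rule exI[of _ "\<bar>prod c UNIV\<bar>"]) (auto simp: measurable_stretch measure_stretch)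
next
  fix m n :: "'n"
  assume "m \<noteq> n"
  let ?h = "\<lambda>v::(real, 'n) vec. \<chi> i. v $ Transposition.transpose m n i"
  have lin: "linear ?h"
    by (rule linearI) (simp_all add: plus_vec_def scaleR_vec_def)
  have meq: "measure lebesgue (?h ` cbox a b) = 1 * measure lebesgue (cbox a b)" for a b
  proof (cases "cbox a b = {}")
    case True then show ?thesis
      by simp
  next
    case False
    then have him: "?h ` (cbox a b) \<noteq> {}"
      by blast
    have eq: "?h ` (cbox a b) = cbox (?h a) (?h b)"
      by (auto simp: image_iff lambda_swap_Galois mem_box_cart) (metis transpose_involutory)+
    show ?thesis
      using him prod.permute [OF permutes_swap_id, where S=UNIV and g="\<lambda>i. (b - a)$i", symmetric]
      by (simp add: eq content_cbox_cart False)
  qed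
  show "\<exists>c\<ge>0. \<forall>S \<in> lmeasurable. ?h ` S \<in> lmeasurable \<and> measure lebesgue (?h ` S) = c * measure lebesgue S"
  proof (intro exI[of _ 1] conjI ballI)
    fix S :: "(real^'n) set" assume S: "S \<in> lmeasurable"
    from measure_linear_sufficient[OF lin S meq]
    show "?h ` S \<in> lmeasurable" "measure lebesgue (?h ` S) = 1 * measure lebesgue S" by auto
  qed simp
next
  fix m n :: "'n"
  assume "m \<noteq> n"
  let ?h = "\<lambda>v::(real, 'n) vec. \<chi> i. if i = m then v $ m + v $ n else v $ i"
  have lin: "linear ?h"
    by (rule linearI) (auto simp: algebra_simps plus_vec_def scaleR_vec_def vec_eq_iff)
  have meq: "measure lebesgue (?h ` (cbox a b)) = 1 * measure lebesgue (cbox a b)" for a b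
  proof (cases "cbox a b = {}")
    case True then show ?thesis by simp
  next
    case False
    then have ne: "(+) (\<chi> i. if i = n then - a $ n else 0) ` cbox a b \<noteq> {}"
      by auto
    let ?v = "\<chi> i. if i = n then - a $ n else 0"
    have "?h ` cbox a b
          = (+) (\<chi> i. if i = m \<or> i = n then a $ n else 0) ` ?h ` (+) ?v ` (cbox a b)"
      using \<open>m \<noteq> n\<close> unfolding image_comp o_def by (force simp: vec_eq_iff)
    then have "measure lebesgue (?h ` (cbox a b))
             = measure lebesgue ((\<lambda>v. \<chi> i. if i = m then v $ m + v $ n else v $ i) `
                                 (+) ?v ` cbox a b)"
      by (rule ssubst) (rule measure_translation)
    also have "\<dots> = measure lebesgue ((\<lambda>v. \<chi> i. if i = m then v $ m + v $ n else v $ i) ` cbox (?v +a) (?v + b))"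
      by (metis (no_types, lifting) cbox_translation)
    also have "\<dots> = measure lebesgue ((+) ?v ` cbox a b)"
      apply (subst measure_shear_interval)
      using \<open>m \<noteq> n\<close> ne apply auto
      apply (simp add: cbox_translation)
      by (metis cbox_borel cbox_translation measure_completion sets_lborel)
    also have "\<dots> = measure lebesgue (cbox a b)"
      by (rule measure_translation)
    finally show ?thesis by simp
  qed
  show "\<exists>c\<ge>0. \<forall>S \<in> lmeasurable. ?h ` S \<in> lmeasurable \<and> measure lebesgue (?h ` S) = c * measure lebesgue S"
  proof (intro exI[of _ 1] conjI ballI)
    fix S :: "(real^'n) set" assume S: "S \<in> lmeasurable"
    from measure_linear_sufficient[OF lin S meq]
    show "?h ` S \<in> lmeasurable" "measure lebesgue (?h ` S) = 1 * measure lebesgue S" by auto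
  qed simp
qed

lemma measure_orthogonal_image_gen:
  fixes f :: "real^'n \<Rightarrow> real^'n"
  assumes f: "orthogonal_transformation f" and S: "S \<in> lmeasurable"
  shows "measure lebesgue (f ` S) = measure lebesgue S"
proof -
  obtain c where c: "c \<ge> 0" "\<And>S. S \<in> lmeasurable \<Longrightarrow> f ` S \<in> lmeasurable \<and> measure lebesgue (f ` S) = c * measure lebesgue S"
    using linear_measure_const[OF orthogonal_transformation_linear[OF f]] by metis
  have f0: "f 0 = 0" using f linear_0 orthogonal_transformation_linear by blast
  have "f ` cball 0 1 = cball 0 1"
    using image_orthogonal_transformation_cball[OF f, of 0 1] f0 by simp
  moreover have "cball (0::real^'n) 1 \<in> lmeasurable" by (simp add: lmeasurable_cball)
  ultimately have "measure lebesgue (cball (0::real^'n) 1) = c * measure lebesgue (cball (0::real^'n) 1)"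
    using c(2) by metis
  moreover have "measure lebesgue (cball (0::real^'n) 1) > 0"
    by (simp add: content_cball)
  ultimately have "c = 1" by simp
  then show ?thesis using c(2)[OF S] by simp
qed




lemma sq_aux: "0 < (a::real) \<Longrightarrow> a < 1 \<Longrightarrow> (sqrt (1 - a\<^sup>2) / a * y)\<^sup>2 = (1 - a\<^sup>2) / a\<^sup>2 * y\<^sup>2"
proof -
  assume a: "0 < a" "a < 1"
  have "a\<^sup>2 < 1" using a by (simp add: power_less_one_iff abs_less_iff)
  hence "(sqrt (1 - a\<^sup>2))\<^sup>2 = 1 - a\<^sup>2" by simp
  thus ?thesis by (simp add: power_mult_distrib power_divide)
qed

lemma cone_slice_iff:
  fixes a y s :: real
  assumes a: "0 < a" "a < 1" and s: "s \<ge> 0"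
  shows "(sqrt (y\<^sup>2 + s) \<le> 1 \<and> a * sqrt (y\<^sup>2 + s) \<le> y) \<longleftrightarrow>
         (y \<in> {0..1} \<and> sqrt s \<le> min (sqrt (1 - y\<^sup>2)) (sqrt (1 - a\<^sup>2) / a * y))"
proof -
  define \<sigma> where "\<sigma> = sqrt (y\<^sup>2 + s)"
  have ys0: "0 \<le> y\<^sup>2 + s" using s by (intro add_nonneg_nonneg) auto
  hence \<sigma>0: "\<sigma> \<ge> 0" unfolding \<sigma>_def by simp
  from ys0 have \<sigma>2: "\<sigma>\<^sup>2 = y\<^sup>2 + s" unfolding \<sigma>_def by simp
  have a2: "a\<^sup>2 < 1" using a by (simp add: power_less_one_iff abs_less_iff)
  have nn: "0 \<le> sqrt (1 - a\<^sup>2) / a * y" if "0 \<le> y" for y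
    using a2 a that by (intro mult_nonneg_nonneg divide_nonneg_pos) auto
  show ?thesis unfolding \<sigma>_def[symmetric]
  proof
    assume h: "\<sigma> \<le> 1 \<and> a * \<sigma> \<le> y"
    have aS: "0 \<le> a * \<sigma>" using a \<sigma>0 by simp
    hence y0: "y \<ge> 0" using h by linarith
    have "\<sigma>\<^sup>2 \<le> 1" using h \<sigma>0 by (simp add: power_le_one)
    hence ys: "y\<^sup>2 + s \<le> 1" using \<sigma>2 by simp
    hence "y\<^sup>2 \<le> 1" using s by linarith
    hence y1: "y \<le> 1" using y0 by (simp add: power_le_one_iff)
    have ss1: "sqrt s \<le> sqrt (1 - y\<^sup>2)" using ys by simp
    have "(a * \<sigma>)\<^sup>2 \<le> y\<^sup>2" using h aS by (simp add: power_mono)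
    hence "a\<^sup>2 * (y\<^sup>2 + s) \<le> y\<^sup>2" using \<sigma>2 by (simp add: power_mult_distrib)
    hence "a\<^sup>2 * s \<le> (1 - a\<^sup>2) * y\<^sup>2" by (simp add: algebra_simps)
    hence "s \<le> (1 - a\<^sup>2) / a\<^sup>2 * y\<^sup>2" using a by (simp add: field_simps)
    hence "s \<le> (sqrt (1 - a\<^sup>2) / a * y)\<^sup>2" using sq_aux[OF a] by simp
    hence "sqrt s \<le> sqrt (1 - a\<^sup>2) / a * y" using nn[OF y0(1)] s
      by (subst real_sqrt_le_iff') auto
    thus "y \<in> {0..1} \<and> sqrt s \<le> min (sqrt (1 - y\<^sup>2)) (sqrt (1 - a\<^sup>2) / a * y)"
      using y0 y1 ss1 by simp
  next
    assume h: "y \<in> {0..1} \<and> sqrt s \<le> min (sqrt (1 - y\<^sup>2)) (sqrt (1 - a\<^sup>2) / a * y)"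
    hence y0: "0 \<le> y" "y \<le> 1" by auto
    have "sqrt s \<le> sqrt (1 - y\<^sup>2)" using h by simp
    hence "s \<le> 1 - y\<^sup>2" by simp
    hence "\<sigma>\<^sup>2 \<le> 1" using \<sigma>2 by simp
    hence A: "\<sigma> \<le> 1" using \<sigma>0 by (simp add: power_le_one_iff)
    have "sqrt s \<le> sqrt (1 - a\<^sup>2) / a * y" using h by simp
    hence "s \<le> (sqrt (1 - a\<^sup>2) / a * y)\<^sup>2" using nn[OF y0(1)] s
      by (subst (asm) real_sqrt_le_iff') auto
    hence "s \<le> (1 - a\<^sup>2) / a\<^sup>2 * y\<^sup>2" using sq_aux[OF a] by simp
    hence "a\<^sup>2 * s \<le> (1 - a\<^sup>2) * y\<^sup>2" using a by (simp add: field_simps)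
    hence "(a * \<sigma>)\<^sup>2 \<le> y\<^sup>2" using \<sigma>2 by (simp add: power_mult_distrib algebra_simps)
    hence "a * \<sigma> \<le> y" using y0 by (simp add: power2_le_iff_abs_le)
    with A show "\<sigma> \<le> 1 \<and> a * \<sigma> \<le> y" by simp
  qed
qed

lemma sqrt_sum_meas:
  assumes "B \<subseteq> I"
  shows "(\<lambda>x. sqrt (\<Sum>j\<in>B. (x j)\<^sup>2)) \<in> borel_measurable (Pi\<^sub>M I (\<lambda>_. lborel::real measure))"
proof -
  have c: "(\<lambda>x. x j) \<in> borel_measurable (Pi\<^sub>M I (\<lambda>_. lborel::real measure))" if "j \<in> B" for j
    using measurable_component_singleton[of j I "\<lambda>_. lborel::real measure"] that assms by auto
  have "(\<lambda>x. \<Sum>j\<in>B. (x j)\<^sup>2) \<in> borel_measurable (Pi\<^sub>M I (\<lambda>_. lborel::real measure))"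
    by (intro borel_measurable_sum borel_measurable_power c)
  thus ?thesis by (rule measurable_compose) simp
qed

lemma cone_set_meas:
  "{f. sqrt (\<Sum>j\<in>insert i A. (f j)\<^sup>2) \<le> 1 \<and> a * sqrt (\<Sum>j\<in>insert i A. (f j)\<^sup>2) \<le> f i}
        \<inter> space (Pi\<^sub>M (insert i A) (\<lambda>_. lborel)) \<in> sets (Pi\<^sub>M (insert i A) (\<lambda>_. lborel::real measure))"
proof -
  let ?M = "Pi\<^sub>M (insert i A) (\<lambda>_. lborel::real measure)"
  have c: "(\<lambda>x. x i) \<in> borel_measurable ?M"
    using measurable_component_singleton[of i "insert i A" "\<lambda>_. lborel::real measure"] by simp
  have s: "(\<lambda>x. sqrt (\<Sum>j\<in>insert i A. (x j)\<^sup>2)) \<in> borel_measurable ?M"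
    by (rule sqrt_sum_meas) simp
  have "{f \<in> space ?M. sqrt (\<Sum>j\<in>insert i A. (f j)\<^sup>2) \<le> 1} \<in> sets ?M"
    using s by measurable
  moreover have "{f \<in> space ?M. a * sqrt (\<Sum>j\<in>insert i A. (f j)\<^sup>2) \<le> f i} \<in> sets ?M"
    using s c by measurable
  ultimately have "{f \<in> space ?M. sqrt (\<Sum>j\<in>insert i A. (f j)\<^sup>2) \<le> 1} \<inter> {f \<in> space ?M. a * sqrt (\<Sum>j\<in>insert i A. (f j)\<^sup>2) \<le> f i} \<in> sets ?M"
    by blast
  also have "{f \<in> space ?M. sqrt (\<Sum>j\<in>insert i A. (f j)\<^sup>2) \<le> 1} \<inter> {f \<in> space ?M. a * sqrt (\<Sum>j\<in>insert i A. (f j)\<^sup>2) \<le> f i}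
     = {f. sqrt (\<Sum>j\<in>insert i A. (f j)\<^sup>2) \<le> 1 \<and> a * sqrt (\<Sum>j\<in>insert i A. (f j)\<^sup>2) \<le> f i} \<inter> space ?M"
    by auto
  finally show ?thesis .
qed

lemma ball_set_meas:
  "{f. sqrt (\<Sum>j\<in>A. (f j)\<^sup>2) \<le> r} \<inter> space (Pi\<^sub>M A (\<lambda>_. lborel)) \<in> sets (Pi\<^sub>M A (\<lambda>_. lborel::real measure))"
proof -
  let ?M = "Pi\<^sub>M A (\<lambda>_. lborel::real measure)"
  have s: "(\<lambda>x. sqrt (\<Sum>j\<in>A. (x j)\<^sup>2)) \<in> borel_measurable ?M"
    by (rule sqrt_sum_meas) simp
  have "{f \<in> space ?M. sqrt (\<Sum>j\<in>A. (f j)\<^sup>2) \<le> r} \<in> sets ?M"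
    using s by measurable
  also have "{f \<in> space ?M. sqrt (\<Sum>j\<in>A. (f j)\<^sup>2) \<le> r} = {f. sqrt (\<Sum>j\<in>A. (f j)\<^sup>2) \<le> r} \<inter> space ?M"
    by auto
  finally show ?thesis .
qed

lemma cone_aux:
  fixes a :: real
  assumes A: "finite A" "i \<notin> A" and a: "0 < a" "a < 1"
  shows "emeasure (Pi\<^sub>M (insert i A) (\<lambda>_. lborel))
     ({f. sqrt (\<Sum>j\<in>insert i A. (f j)\<^sup>2) \<le> 1 \<and> a * sqrt (\<Sum>j\<in>insert i A. (f j)\<^sup>2) \<le> f i}
        \<inter> space (Pi\<^sub>M (insert i A) (\<lambda>_. lborel)))
   = (\<integral>\<^sup>+ y. indicator {0..1} y * ennreal (unit_ball_vol (real (card A)) *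
        (min (sqrt (1 - y\<^sup>2)) (sqrt (1 - a\<^sup>2) / a * y)) ^ card A) \<partial>lborel)"
proof -
  interpret product_sigma_finite "\<lambda>_. lborel"
    by standard
  define R where "R y = min (sqrt (1 - y\<^sup>2)) (sqrt (1 - a\<^sup>2) / a * y)" for y :: real
  define S where "S = {f. sqrt (\<Sum>j\<in>insert i A. (f j)\<^sup>2) \<le> 1 \<and> a * sqrt (\<Sum>j\<in>insert i A. (f j)\<^sup>2) \<le> f i}
        \<inter> space (Pi\<^sub>M (insert i A) (\<lambda>_. lborel))"
  define T where "T y = {f. sqrt (\<Sum>j\<in>A. (f j)\<^sup>2) \<le> R y} \<inter> space (Pi\<^sub>M A (\<lambda>_. lborel))" for y
  have Smeas: "S \<in> sets (Pi\<^sub>M (insert i A) (\<lambda>_. lborel))"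
    unfolding S_def by (rule cone_set_meas)
  have "emeasure (Pi\<^sub>M (insert i A) (\<lambda>_. lborel)) S = nn_integral (Pi\<^sub>M (insert i A) (\<lambda>_. lborel)) (indicator S)"
    using Smeas by (subst nn_integral_indicator) auto
  also have "\<dots> = (\<integral>\<^sup>+ y. \<integral>\<^sup>+ x. indicator S (x(i := y)) \<partial>Pi\<^sub>M A (\<lambda>_. lborel) \<partial>lborel)"
    using A Smeas by (subst product_nn_integral_insert_rev) auto
  also have "\<dots> = (\<integral>\<^sup>+ y. \<integral>\<^sup>+ x. indicator {0..1} y * indicator (T y) x \<partial>Pi\<^sub>M A (\<lambda>_. lborel) \<partial>lborel)"
  proof (intro nn_integral_cong)
    fix y :: real and x :: "'a \<Rightarrow> real" assume x: "x \<in> space (Pi\<^sub>M A (\<lambda>_. lborel))"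
    have sum: "(\<Sum>j\<in>insert i A. ((x(i := y)) j)\<^sup>2) = y\<^sup>2 + (\<Sum>j\<in>A. (x j)\<^sup>2)"
    proof -
      have "(\<Sum>j\<in>A. ((x(i := y)) j)\<^sup>2) = (\<Sum>j\<in>A. (x j)\<^sup>2)"
        using A by (intro sum.cong) auto
      thus ?thesis using A by simp
    qed
    have xs: "x(i := y) \<in> space (Pi\<^sub>M (insert i A) (\<lambda>_. lborel))"
      using x A by (auto simp: space_PiM PiE_def extensional_def)
    have s0: "(\<Sum>j\<in>A. (x j)\<^sup>2) \<ge> 0" by (intro sum_nonneg) auto
    have "x(i := y) \<in> S \<longleftrightarrow> (y \<in> {0..1} \<and> x \<in> T y)"
      unfolding S_def T_def R_def using xs x sum cone_slice_iff[OF a s0, of y] by auto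
    thus "indicator S (x(i := y)) = (indicator {0..1} y * indicator (T y) x :: ennreal)"
      by (auto simp: indicator_def)
  qed
  also have "\<dots> = (\<integral>\<^sup>+ y. indicator {0..1} y * emeasure (Pi\<^sub>M A (\<lambda>_. lborel)) (T y) \<partial>lborel)"
  proof (intro nn_integral_cong)
    fix y :: real
    have "T y \<in> sets (Pi\<^sub>M A (\<lambda>_. lborel))" unfolding T_def by (rule ball_set_meas)
    thus "(\<integral>\<^sup>+ x. indicator {0..1} y * indicator (T y) x \<partial>Pi\<^sub>M A (\<lambda>_. lborel)) =
          indicator {0..1} y * emeasure (Pi\<^sub>M A (\<lambda>_. lborel)) (T y)"
      by (subst nn_integral_cmult) auto
  qed
  also have "\<dots> = (\<integral>\<^sup>+ y. indicator {0..1} y * ennreal (unit_ball_vol (real (card A)) * (R y) ^ card A) \<partial>lborel)"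
  proof (intro nn_integral_cong_AE)
    have "AE y in lborel. y \<notin> {0,1}"
      by (intro AE_not_in countable_imp_null_set_lborel) auto
    thus "AE y in lborel. indicator {0..1} y * emeasure (Pi\<^sub>M A (\<lambda>_. lborel)) (T y) =
       indicator {0..1} y * ennreal (unit_ball_vol (real (card A)) * (R y) ^ card A)"
    proof eventually_elim
      case (elim y)
      show ?case
      proof (cases "y \<in> {0<..<1}")
        case True
        have "y\<^sup>2 < 1" using True by (simp add: power_less_one_iff abs_less_iff)
        hence p1: "sqrt (1 - y\<^sup>2) > 0" by simp
        have "a\<^sup>2 < 1" using a by (simp add: power_less_one_iff abs_less_iff)
        hence "sqrt (1 - a\<^sup>2) > 0" by simp
        hence p2: "sqrt (1 - a\<^sup>2) / a * y > 0" using a True by simp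
        have "R y > 0" unfolding R_def using p1 p2 by simp
        thus ?thesis unfolding T_def using A by (subst emeasure_cball_aux) auto
      qed (use elim in auto)
    qed
  qed
  finally show ?thesis unfolding S_def R_def .
qed

lemma cone_volume:
  fixes b0 :: "'a::euclidean_space" and a :: real
  assumes b0: "b0 \<in> Basis" and a: "0 < a" "a < 1"
  shows "emeasure lborel {y::'a. norm y \<le> 1 \<and> a * norm y \<le> y \<bullet> b0}
   = (\<integral>\<^sup>+ y. indicator {0..1} y * ennreal (unit_ball_vol (real (DIM('a) - 1)) *
        (min (sqrt (1 - y\<^sup>2)) (sqrt (1 - a\<^sup>2) / a * y)) ^ (DIM('a) - 1)) \<partial>lborel)"
proof -
  let ?A = "Basis - {b0} :: 'a set"
  have ins: "insert b0 ?A = Basis" using b0 by auto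
  have cardA: "card ?A = DIM('a) - 1" using b0 by (simp add: card_Diff_singleton)
  have meas: "{y::'a. norm y \<le> 1 \<and> a * norm y \<le> y \<bullet> b0} \<in> sets borel"
    by measurable
  have "emeasure lborel {y::'a. norm y \<le> 1 \<and> a * norm y \<le> y \<bullet> b0} =
        emeasure (distr (\<Pi>\<^sub>M b\<in>Basis. lborel) borel (\<lambda>f. \<Sum>b\<in>Basis. f b *\<^sub>R b)) {y::'a. norm y \<le> 1 \<and> a * norm y \<le> y \<bullet> b0}"
    by (subst lborel_eq) simp
  also have "\<dots> = emeasure (\<Pi>\<^sub>M b\<in>Basis. lborel)
      ({f. norm (\<Sum>b\<in>Basis. f b *\<^sub>R b :: 'a) \<le> 1 \<and> a * norm (\<Sum>b\<in>Basis. f b *\<^sub>R b :: 'a) \<le> (\<Sum>b\<in>Basis. f b *\<^sub>R b) \<bullet> b0}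
        \<inter> space (\<Pi>\<^sub>M b\<in>Basis. lborel))"
    using meas by (subst emeasure_distr) (auto simp: vimage_def Int_def conj_commute)
  also have "{f. norm (\<Sum>b\<in>Basis. f b *\<^sub>R b :: 'a) \<le> 1 \<and> a * norm (\<Sum>b\<in>Basis. f b *\<^sub>R b :: 'a) \<le> (\<Sum>b\<in>Basis. f b *\<^sub>R b) \<bullet> b0}
     = {f. sqrt (\<Sum>j\<in>insert b0 ?A. (f j)\<^sup>2) \<le> 1 \<and> a * sqrt (\<Sum>j\<in>insert b0 ?A. (f j)\<^sup>2) \<le> f b0}"
  proof -
    have n: "norm (\<Sum>b\<in>Basis. f b *\<^sub>R b :: 'a) = sqrt (\<Sum>j\<in>Basis. (f j)\<^sup>2)" for f :: "'a \<Rightarrow> real"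
      using euclidean_dist_l2[of 0 "\<Sum>b\<in>Basis. f b *\<^sub>R b :: 'a"] by (simp add: L2_set_def)
    show ?thesis unfolding ins using b0 by (simp add: n)
  qed
  also have "emeasure (\<Pi>\<^sub>M b\<in>Basis. lborel)
      ({f. sqrt (\<Sum>j\<in>insert b0 ?A. (f j)\<^sup>2) \<le> 1 \<and> a * sqrt (\<Sum>j\<in>insert b0 ?A. (f j)\<^sup>2) \<le> f b0}
        \<inter> space (\<Pi>\<^sub>M b\<in>Basis. lborel)) =
     emeasure (\<Pi>\<^sub>M b\<in>insert b0 ?A. lborel)
      ({f. sqrt (\<Sum>j\<in>insert b0 ?A. (f j)\<^sup>2) \<le> 1 \<and> a * sqrt (\<Sum>j\<in>insert b0 ?A. (f j)\<^sup>2) \<le> f b0}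
        \<inter> space (\<Pi>\<^sub>M b\<in>insert b0 ?A. lborel))"
    unfolding ins ..
  also have "\<dots> = (\<integral>\<^sup>+ y. indicator {0..1} y * ennreal (unit_ball_vol (real (card ?A)) *
        (min (sqrt (1 - y\<^sup>2)) (sqrt (1 - a\<^sup>2) / a * y)) ^ card ?A) \<partial>lborel)"
    by (rule cone_aux) (use a in auto)
  finally show ?thesis unfolding cardA .
qed




lemma I1:
  fixes a c U :: real and n :: nat
  assumes "0 \<le> a"
  shows "((\<lambda>t. U * (c * t) ^ n) has_integral (U * c ^ n * a ^ (n + 1) / (n + 1))) {0..a}"
proof -
  have "((\<lambda>t. U * (c * t) ^ n) has_integral ((\<lambda>t. U * c ^ n * t ^ (n + 1) / (n + 1)) a - (\<lambda>t. U * c ^ n * t ^ (n + 1) / (n + 1)) 0)) {0..a}"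
  proof (rule fundamental_theorem_of_calculus[OF assms])
    fix x :: real assume "x \<in> {0..a}"
    show "((\<lambda>t. U * c ^ n * t ^ (n + 1) / (n + 1)) has_vector_derivative U * (c * x) ^ n) (at x within {0..a})"
      unfolding has_real_derivative_iff_has_vector_derivative[symmetric]
      by (rule derivative_eq_intros refl | simp)+ (simp add: power_mult_distrib field_simps)
  qed
  thus ?thesis by simp
qed

lemma alg: "(a::real) > 0 \<Longrightarrow> m > 0 \<Longrightarrow> (-U/(a*m)) * (m * (-x*Q)) = U*(x/a*Q)"
  by (simp add: field_simps)

lemma I2:
  fixes a U :: real and n :: nat
  assumes "0 < a" "a \<le> 1"
  shows "((\<lambda>t. U * (t / a * sqrt (1 - t\<^sup>2) ^ n)) has_integral (U * sqrt (1 - a\<^sup>2) ^ (n + 2) / (a * (n + 2)))) {a..1}"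
proof -
  define F where "F t = - U * sqrt (1 - t\<^sup>2) ^ (n + 2) / (a * (n + 2))" for t :: real
  have "((\<lambda>t. U * (t / a * sqrt (1 - t\<^sup>2) ^ n)) has_integral (F 1 - F a)) {a..1}"
  proof (rule fundamental_theorem_of_calculus_interior[OF assms(2)])
    show "continuous_on {a..1} F" unfolding F_def by (intro continuous_intros) (use assms in auto)
  next
    fix x :: real assume x: "x \<in> {a<..<1}"
    hence x2: "x\<^sup>2 < 1" using assms by (simp add: power_less_one_iff abs_less_iff)
    hence pos: "0 < 1 - x\<^sup>2" by simp
    hence sp: "sqrt (1 - x\<^sup>2) > 0" by simp
    have d: "((\<lambda>t. sqrt (1 - t\<^sup>2)) has_real_derivative (inverse (sqrt (1 - x\<^sup>2)) / 2 * (- (2 * x)))) (at x)"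
      by (rule DERIV_chain2[where g="\<lambda>t. 1 - t\<^sup>2", OF DERIV_real_sqrt[OF pos]]) (rule derivative_eq_intros refl | simp)+
    have e1: "inverse (sqrt (1 - x\<^sup>2)) / 2 * (- (2 * x)) * sqrt (1 - x\<^sup>2) ^ (n + 2 - Suc 0) = - x * sqrt (1 - x\<^sup>2) ^ n"
      using sp by (simp add: field_simps)
    have "(F has_real_derivative (- U / (a * (n + 2))) * (of_nat (n + 2) * (- x * sqrt (1 - x\<^sup>2) ^ n))) (at x)"
    proof -
      have "((\<lambda>t. sqrt (1 - t\<^sup>2) ^ (n + 2)) has_real_derivative (of_nat (n + 2) * ((inverse (sqrt (1 - x\<^sup>2)) / 2 * (- (2 * x))) * sqrt (1 - x\<^sup>2) ^ (n + 2 - Suc 0)))) (at x)"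
        by (rule DERIV_power[OF d])
      hence "((\<lambda>t. (- U / (a * (n + 2))) * sqrt (1 - t\<^sup>2) ^ (n + 2)) has_real_derivative (- U / (a * (n + 2))) * (of_nat (n + 2) * (- x * sqrt (1 - x\<^sup>2) ^ n))) (at x)"
        unfolding e1 by (rule DERIV_cmult)
      moreover have "(\<lambda>t. (- U / (a * (n + 2))) * sqrt (1 - t\<^sup>2) ^ (n + 2)) = F"
        unfolding F_def by (auto simp: field_simps)
      ultimately show ?thesis by simp
    qed
    moreover have "(- U / (a * (n + 2))) * (of_nat (n + 2) * (- x * sqrt (1 - x\<^sup>2) ^ n))
       = U * (x / a * sqrt (1 - x\<^sup>2) ^ n)"
      using alg[of a "real (n + 2)" U x "sqrt (1 - x\<^sup>2) ^ n"] assms by simp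
    ultimately show "(F has_vector_derivative U * (x / a * sqrt (1 - x\<^sup>2) ^ n)) (at x)"
      by (simp add: has_real_derivative_iff_has_vector_derivative[symmetric])
  qed
  moreover have "F 1 - F a = U * sqrt (1 - a\<^sup>2) ^ (n + 2) / (a * (n + 2))"
    unfolding F_def by simp
  ultimately show ?thesis by simp
qed

lemma id_aux:
  fixes a m :: real
  assumes "a > 0" "m \<ge> 0"
  shows "1 / (a * (m + 1)) - (a / (m + 1) + (1 - a\<^sup>2) / (a * (m + 2))) = (1 - a\<^sup>2) / (a * (m + 1) * (m + 2))"
proof -
  define p where "p = m + 1"
  define q where "q = m + 2"
  have pq: "p > 0" "q > 0" "q = p + 1" using assms unfolding p_def q_def by auto
  have e1: "1 / (a * p) = q / (a * p * q)" using pq assms by simp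
  have e2: "a / p = a * a * q / (a * p * q)" using pq assms by simp
  have e3: "(1 - a\<^sup>2) / (a * q) = (1 - a\<^sup>2) * p / (a * p * q)" using pq assms by simp
  have "1 / (a * p) - (a / p + (1 - a\<^sup>2) / (a * q)) = (q - (a * a * q + (1 - a\<^sup>2) * p)) / (a * p * q)"
    unfolding e1 e2 e3 by (simp add: diff_divide_distrib add_divide_distrib)
  also have "q - (a * a * q + (1 - a\<^sup>2) * p) = 1 - a\<^sup>2"
    using pq by (simp add: algebra_simps power2_eq_square)
  finally show ?thesis unfolding p_def q_def .
qed

lemma oned_real:
  fixes a U :: real and n :: nat
  assumes a: "0 < a" "a < 1" and U: "U \<ge> 0"
  shows "U * (sqrt (1 - a\<^sup>2) / a) ^ n * a ^ (n + 1) / (n + 1) + U * sqrt (1 - a\<^sup>2) ^ (n + 2) / (a * (n + 2))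
    \<le> U * sqrt (1 - a\<^sup>2) ^ n / (a * (n + 1))"
proof -
  define s where "s = sqrt (1 - a\<^sup>2)"
  have a2: "a\<^sup>2 < 1" using a by (simp add: power_less_one_iff abs_less_iff)
  have s2: "s\<^sup>2 = 1 - a\<^sup>2" unfolding s_def using a2 by simp
  have s0: "s \<ge> 0" unfolding s_def using a2 by simp
  define S where "S = U * s ^ n"
  have S0: "S \<ge> 0" unfolding S_def using U s0 by simp
  have e1: "U * (s / a) ^ n * a ^ (n + 1) / (n + 1) = S * (a / (n + 1))"
    unfolding S_def using a by (simp add: power_divide field_simps)
  have e2: "U * s ^ (n + 2) / (a * (n + 2)) = S * ((1 - a\<^sup>2) / (a * (n + 2)))"
  proof -
    have "s ^ (n + 2) = s ^ n * s\<^sup>2" by (simp add: power_add power2_eq_square)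
    hence "s ^ (n + 2) = s ^ n * (1 - a\<^sup>2)" using s2 by simp
    thus ?thesis unfolding S_def by simp
  qed
  have e3: "U * s ^ n / (a * (n + 1)) = S * (1 / (a * (n + 1)))"
    unfolding S_def by simp
  have id: "1 / (a * (n + 1)) - (a / (n + 1) + (1 - a\<^sup>2) / (a * (n + 2))) = (1 - a\<^sup>2) / (a * (n + 1) * (n + 2))"
    using id_aux[of a "real n"] a by (simp only: of_nat_add of_nat_1 of_nat_numeral)
  have "(1 - a\<^sup>2) / (a * (n + 1) * (n + 2)) \<ge> 0" using a a2 by simp
  hence "a / (n + 1) + (1 - a\<^sup>2) / (a * (n + 2)) \<le> 1 / (a * (n + 1))" using id by linarith
  hence "S * (a / (n + 1) + (1 - a\<^sup>2) / (a * (n + 2))) \<le> S * (1 / (a * (n + 1)))"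
    using S0 by (rule mult_left_mono)
  thus ?thesis unfolding s_def[symmetric] e1 e2 e3 by (simp add: distrib_left)
qed

lemma oned_bound:
  fixes a U :: real and n :: nat
  assumes a: "0 < a" "a < 1" and U: "U \<ge> 0"
  shows "(\<integral>\<^sup>+ y. indicator {0..1} y * ennreal (U * (min (sqrt (1 - y\<^sup>2)) (sqrt (1 - a\<^sup>2) / a * y)) ^ n) \<partial>lborel)
     \<le> ennreal (U * sqrt (1 - a\<^sup>2) ^ n / (a * (n + 1)))"
proof -
  define c where "c = sqrt (1 - a\<^sup>2) / a"
  have a2: "a\<^sup>2 < 1" using a by (simp add: power_less_one_iff abs_less_iff)
  have c0: "c \<ge> 0" unfolding c_def using a a2 by simp
  have pw: "indicator {0..1} y * ennreal (U * (min (sqrt (1 - y\<^sup>2)) (c * y)) ^ n)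
      \<le> ennreal (U * (c * y) ^ n) * indicator {0..a} y + ennreal (U * (y / a * sqrt (1 - y\<^sup>2) ^ n)) * indicator {a..1} y"
    for y :: real
  proof (cases "y \<in> {0..1}")
    case False thus ?thesis by simp
  next
    case True
    hence y: "0 \<le> y" "y \<le> 1" by auto
    have "y\<^sup>2 \<le> 1" using y by (simp add: power_le_one)
    hence sq0: "sqrt (1 - y\<^sup>2) \<ge> 0" by simp
    have R0: "min (sqrt (1 - y\<^sup>2)) (c * y) \<ge> 0" using sq0 c0 y by simp
    show ?thesis
    proof (cases "y \<le> a")
      case True
      have "(min (sqrt (1 - y\<^sup>2)) (c * y)) ^ n \<le> (c * y) ^ n"
        using R0 by (intro power_mono) auto
      hence "U * (min (sqrt (1 - y\<^sup>2)) (c * y)) ^ n \<le> U * (c * y) ^ n" using U by (rule mult_left_mono)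
      hence "indicator {0..1} y * ennreal (U * (min (sqrt (1 - y\<^sup>2)) (c * y)) ^ n) \<le> ennreal (U * (c * y) ^ n) * indicator {0..a} y"
        using True y by (simp add: ennreal_leI)
      thus ?thesis by (rule order_trans) simp
    next
      case False
      have "(min (sqrt (1 - y\<^sup>2)) (c * y)) ^ n \<le> sqrt (1 - y\<^sup>2) ^ n"
        using R0 by (intro power_mono) auto
      also have "\<dots> \<le> y / a * sqrt (1 - y\<^sup>2) ^ n"
      proof -
        have "1 \<le> y / a" using False a by simp
        from mult_right_mono[OF this, of "sqrt (1 - y\<^sup>2) ^ n"] show ?thesis using sq0 by simp
      qed
      finally have "U * (min (sqrt (1 - y\<^sup>2)) (c * y)) ^ n \<le> U * (y / a * sqrt (1 - y\<^sup>2) ^ n)" using U by (rule mult_left_mono)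
      hence "indicator {0..1} y * ennreal (U * (min (sqrt (1 - y\<^sup>2)) (c * y)) ^ n) \<le> ennreal (U * (y / a * sqrt (1 - y\<^sup>2) ^ n)) * indicator {a..1} y"
        using False y by (simp add: ennreal_leI)
      thus ?thesis by (rule order_trans) simp
    qed
  qed
  have "(\<integral>\<^sup>+ y. indicator {0..1} y * ennreal (U * (min (sqrt (1 - y\<^sup>2)) (c * y)) ^ n) \<partial>lborel)
     \<le> (\<integral>\<^sup>+ y. ennreal (U * (c * y) ^ n) * indicator {0..a} y + ennreal (U * (y / a * sqrt (1 - y\<^sup>2) ^ n)) * indicator {a..1} y \<partial>lborel)"
    by (intro nn_integral_mono pw)
  also have "\<dots> = (\<integral>\<^sup>+ y. ennreal (U * (c * y) ^ n) * indicator {0..a} y \<partial>lborel) + (\<integral>\<^sup>+ y. ennreal (U * (y / a * sqrt (1 - y\<^sup>2) ^ n)) * indicator {a..1} y \<partial>lborel)"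
    by (intro nn_integral_add) auto
  also have "(\<integral>\<^sup>+ y. ennreal (U * (c * y) ^ n) * indicator {0..a} y \<partial>lborel) = ennreal (U * c ^ n * a ^ (n + 1) / (n + 1))"
    by (rule nn_integral_has_integral_lebesgue'[OF _ I1]) (use U c0 a in auto)
  also have "(\<integral>\<^sup>+ y. ennreal (U * (y / a * sqrt (1 - y\<^sup>2) ^ n)) * indicator {a..1} y \<partial>lborel) = ennreal (U * sqrt (1 - a\<^sup>2) ^ (n + 2) / (a * (n + 2)))"
  proof (rule nn_integral_has_integral_lebesgue'[OF _ I2])
    fix y assume "y \<in> {a..1}"
    hence y: "a \<le> y" "y \<le> 1" by auto
    have "y\<^sup>2 \<le> 1" using y a by (simp add: power_le_one)
    thus "0 \<le> U * (y / a * sqrt (1 - y\<^sup>2) ^ n)" using U a y by simp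
  qed (use a in auto)
  also have "ennreal (U * c ^ n * a ^ (n + 1) / (n + 1)) + ennreal (U * sqrt (1 - a\<^sup>2) ^ (n + 2) / (a * (n + 2)))
     = ennreal (U * c ^ n * a ^ (n + 1) / (n + 1) + U * sqrt (1 - a\<^sup>2) ^ (n + 2) / (a * (n + 2)))"
    using U c0 a a2 by (intro ennreal_plus[symmetric]) auto
  also have "\<dots> \<le> ennreal (U * sqrt (1 - a\<^sup>2) ^ n / (a * (n + 1)))"
    unfolding c_def by (intro ennreal_leI oned_real a U)
  finally show ?thesis unfolding c_def .
qed




lemma gamma_half:
  fixes x :: real
  assumes x: "x > 0"
  shows "Gamma (x + 1/2) \<le> Gamma x * sqrt x"
proof -
  have "(ln \<circ> Gamma) ((1 - 1/2) *\<^sub>R x + (1/2) *\<^sub>R (x + 1)) \<le> (1 - 1/2) * (ln \<circ> Gamma) x + (1/2) * (ln \<circ> Gamma) (x + 1)"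
    by (rule convex_onD[OF log_convex_Gamma_real]) (use x in auto)
  moreover have eq: "(1 - 1/2) *\<^sub>R x + (1/2) *\<^sub>R (x + 1) = x + 1/2" by (simp add: field_simps)
  ultimately have "ln (Gamma (x + 1/2)) \<le> (1/2) * ln (Gamma x) + (1/2) * ln (Gamma (x + 1))"
    by simp
  also have "Gamma (x + 1) = x * Gamma x" using Gamma_plus1[of x] x by (simp add: nonpos_Ints_def)
  also have "ln (x * Gamma x) = ln x + ln (Gamma x)" by (rule ln_mult_pos) (use x Gamma_real_pos[OF x] in auto)
  finally have "ln (Gamma (x + 1/2)) \<le> ln (Gamma x) + ln x / 2" by (simp add: field_simps)
  also have "ln x / 2 = ln (sqrt x)" using x by (simp add: ln_sqrt)
  also have "ln (Gamma x) + ln (sqrt x) = ln (Gamma x * sqrt x)" by (rule ln_mult_pos[symmetric]) (use x Gamma_real_pos[OF x] in auto)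
  finally show ?thesis using x Gamma_real_pos[of "x + 1/2"] Gamma_real_pos[OF x] by simp
qed

lemma uv_ratio:
  fixes n :: nat
  assumes n: "n \<ge> 1"
  shows "2 * unit_ball_vol (real n) \<le> sqrt (real n + 1) * unit_ball_vol (real (n + 1))"
proof -
  define x where "x = real n / 2 + 1"
  have x0: "x > 0" unfolding x_def by simp
  have G0: "Gamma x > 0" "Gamma (x + 1/2) > 0" using x0 by (simp_all add: Gamma_real_pos)
  have uvn: "unit_ball_vol (real n) = pi powr (real n / 2) / Gamma x"
    unfolding unit_ball_vol_def x_def by simp
  have uvn1: "unit_ball_vol (real (n + 1)) = sqrt pi * pi powr (real n / 2) / Gamma (x + 1/2)"
  proof -
    have "pi powr (real (n + 1) / 2) = pi powr (1/2) * pi powr (real n / 2)"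
      by (simp add: powr_add[symmetric] add_divide_distrib)
    moreover have "real (n + 1) / 2 + 1 = x + 1/2" unfolding x_def by (simp add: field_simps)
    ultimately show ?thesis unfolding unit_ball_vol_def by (simp add: powr_half_sqrt)
  qed
  have "4 * x \<le> pi * (real n + 1)"
  proof -
    have "4 * x = 2 * real n + 4" unfolding x_def by simp
    also have "\<dots> \<le> 3 * (real n + 1)" using n by simp
    also have "\<dots> \<le> pi * (real n + 1)" using pi_gt3 by (intro mult_right_mono) auto
    finally show ?thesis .
  qed
  hence "sqrt (4 * x) \<le> sqrt (pi * (real n + 1))" by simp
  hence sx: "2 * sqrt x \<le> sqrt pi * sqrt (real n + 1)" by (simp add: real_sqrt_mult)
  have "2 * Gamma (x + 1/2) \<le> 2 * (Gamma x * sqrt x)" using gamma_half[OF x0] by simp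
  also have "\<dots> = Gamma x * (2 * sqrt x)" by simp
  also have "\<dots> \<le> Gamma x * (sqrt pi * sqrt (real n + 1))" using sx G0 by (intro mult_left_mono) auto
  finally have key: "2 * Gamma (x + 1/2) \<le> Gamma x * (sqrt pi * sqrt (real n + 1))" .
  have P: "pi powr (real n / 2) > 0" by simp
  have "2 * unit_ball_vol (real n) = 2 * pi powr (real n / 2) / Gamma x" by (simp add: uvn)
  also have "\<dots> \<le> sqrt (real n + 1) * (sqrt pi * pi powr (real n / 2) / Gamma (x + 1/2))"
    using key G0 P by (simp add: field_simps)
  finally show ?thesis unfolding uvn1 .
qed




definition Cn :: "real \<Rightarrow> 'a::euclidean_space \<Rightarrow> 'a set" where
  "Cn a u = {y. norm y \<le> 1 \<and> a * norm y \<le> y \<bullet> u}"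

lemma Cn_compact: "compact (Cn a u)"
proof -
  have "closed (Cn a u)" unfolding Cn_def
    by (intro closed_Collect_conj closed_Collect_le continuous_intros)
  moreover have "bounded (Cn a u)" unfolding Cn_def bounded_iff by auto
  ultimately show ?thesis by (simp add: compact_eq_bounded_closed)
qed

lemma Cn_emeasure: "emeasure lborel (Cn a u) = ennreal (measure lebesgue (Cn a u))"
proof -
  have b: "Cn a u \<in> sets borel" using Cn_compact[of a u] by (simp add: borel_closed compact_imp_closed)
  have "emeasure lborel (Cn a u) < \<infinity>"
    by (rule emeasure_bounded_finite[OF compact_imp_bounded[OF Cn_compact]])
  hence "emeasure lborel (Cn a u) = ennreal (measure lborel (Cn a u))"
    by (simp add: emeasure_eq_ennreal_measure)
  also have "measure lborel (Cn a u) = measure lebesgue (Cn a u)" using b by simp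
  finally show ?thesis .
qed

lemma Cn_rot:
  fixes e b0 :: "real^'k"
  assumes "norm e = 1" "norm b0 = 1"
  shows "emeasure lborel (Cn a e) = emeasure lborel (Cn a b0)"
proof -
  obtain f where f: "orthogonal_transformation f" "f b0 = e"
    using orthogonal_transformation_exists_1[OF assms(2,1)] by metis
  have inner: "f x \<bullet> f y = x \<bullet> y" for x y using f(1) unfolding orthogonal_transformation_def by simp
  have nrm: "norm (f x) = norm x" for x using f(1) orthogonal_transformation_norm by blast
  have "f ` Cn a b0 = Cn a e"
  proof
    show "f ` Cn a b0 \<subseteq> Cn a e" unfolding Cn_def using inner[of _ b0] nrm f(2) by auto
  next
    show "Cn a e \<subseteq> f ` Cn a b0"
    proof
      fix z assume z: "z \<in> Cn a e"
      obtain y where y: "z = f y" using orthogonal_transformation_surj[OF f(1)] by (metis surjD)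
      have "y \<in> Cn a b0" using z unfolding Cn_def y using inner[of y b0] nrm[of y] f(2) by auto
      thus "z \<in> f ` Cn a b0" using y by auto
    qed
  qed
  hence "measure lebesgue (Cn a e) = measure lebesgue (Cn a b0)"
    using measure_orthogonal_image_gen[OF f(1) lmeasurable_compact[OF Cn_compact[of a b0]]] by simp
  thus ?thesis by (simp add: Cn_emeasure)
qed

lemma alg2: "(t::real) > 0 \<Longrightarrow> a > 0 \<Longrightarrow> (t * V) * S / (2 * a * (t * t)) = S / (2 * a * t) * V"
  by (simp add: field_simps)

lemma cap_vol_ii:
  fixes e :: "real^'k" and a :: real
  assumes e: "norm e = 1" and a: "0 < a" "a < 1" and k: "CARD('k) \<ge> 2"
  shows "emeasure lborel (Cn a e) \<le>
     ennreal (sqrt (1 - a\<^sup>2) ^ (CARD('k) - 1) / (2 * a * sqrt (real CARD('k)))) * emeasure lborel (ball (0::real^'k) 1)"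
proof -
  define b0 :: "real^'k" where "b0 = (SOME i. i \<in> Basis)"
  have b0: "b0 \<in> Basis" unfolding b0_def by (rule SOME_Basis)
  define n where "n = CARD('k) - 1"
  have n1: "n \<ge> 1" "n + 1 = CARD('k)" unfolding n_def using k by auto
  define s where "s = sqrt (1 - a\<^sup>2)"
  have s0: "s \<ge> 0" unfolding s_def using a by (simp add: power_le_one)
  define U where "U = unit_ball_vol (real n)"
  have U0: "U \<ge> 0" unfolding U_def by simp
  have "emeasure lborel (Cn a e) = emeasure lborel (Cn a b0)"
    by (rule Cn_rot[OF e]) (simp add: b0)
  also have "\<dots> = (\<integral>\<^sup>+ y. indicator {0..1} y * ennreal (unit_ball_vol (real (DIM(real^'k) - 1)) *
        (min (sqrt (1 - y\<^sup>2)) (sqrt (1 - a\<^sup>2) / a * y)) ^ (DIM(real^'k) - 1)) \<partial>lborel)"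
    unfolding Cn_def by (rule cone_volume[OF b0 a])
  also have "\<dots> = (\<integral>\<^sup>+ y. indicator {0..1} y * ennreal (U * (min (sqrt (1 - y\<^sup>2)) (sqrt (1 - a\<^sup>2) / a * y)) ^ n) \<partial>lborel)"
    unfolding U_def n_def by simp
  also have "\<dots> \<le> ennreal (U * s ^ n / (a * (n + 1)))"
    unfolding s_def by (rule oned_bound[OF a U0])
  also have "\<dots> \<le> ennreal (s ^ n / (2 * a * sqrt (real (n + 1))) * unit_ball_vol (real (n + 1)))"
  proof (rule ennreal_leI)
    have r: "2 * U \<le> sqrt (real n + 1) * unit_ball_vol (real (n + 1))"
      unfolding U_def by (rule uv_ratio[OF n1(1)])
    have sq: "sqrt (real n + 1) * sqrt (real n + 1) = real n + 1" by simp
    have pos: "sqrt (real n + 1) > 0" by simp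
    have "U * s ^ n / (a * (n + 1)) = (2 * U) * s ^ n / (2 * a * (sqrt (real n + 1) * sqrt (real n + 1)))"
      using a by (simp add: sq)
    also have "\<dots> \<le> (sqrt (real n + 1) * unit_ball_vol (real (n + 1))) * s ^ n / (2 * a * (sqrt (real n + 1) * sqrt (real n + 1)))"
      using r a s0 by (intro divide_right_mono mult_right_mono) auto
    also have "\<dots> = s ^ n / (2 * a * sqrt (real n + 1)) * unit_ball_vol (real (n + 1))"
      using alg2[OF pos a(1)] by simp
    also have "sqrt (real n + 1) = sqrt (real (n + 1))" by simp
    finally show "U * s ^ n / (a * (n + 1)) \<le> s ^ n / (2 * a * sqrt (real (n + 1))) * unit_ball_vol (real (n + 1))" .
  qed
  also have "\<dots> = ennreal (s ^ n / (2 * a * sqrt (real (n + 1)))) * ennreal (unit_ball_vol (real (n + 1)))"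
    by (rule ennreal_mult) (use a s0 in auto)
  also have "ennreal (unit_ball_vol (real (n + 1))) = emeasure lborel (ball (0::real^'k) 1)"
    using emeasure_ball[of 1 "0::real^'k"] n1(2) by simp
  finally show ?thesis unfolding s_def n_def using n1(2) by (simp add: n_def)
qed

lemma cap_vol_i:
  fixes e :: "real^'k" and a :: real
  assumes e: "norm e = 1" and a: "0 \<le> a" "a \<le> 1 / sqrt 2"
  shows "emeasure lborel (Cn a e) \<le>
     ennreal (sqrt (1 - a\<^sup>2) ^ CARD('k)) * emeasure lborel (ball (0::real^'k) 1)"
proof -
  have a2: "a\<^sup>2 \<le> 1/2"
  proof -
    have "a\<^sup>2 \<le> (1 / sqrt 2)\<^sup>2" using a by (intro power_mono) auto
    thus ?thesis by (simp add: power_divide)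
  qed
  have sub: "Cn a e \<subseteq> cball (a *\<^sub>R e) (sqrt (1 - a\<^sup>2))"
  proof
    fix y assume "y \<in> Cn a e"
    hence y: "norm y \<le> 1" "a * norm y \<le> y \<bullet> e" unfolding Cn_def by auto
    define r where "r = norm y"
    have r0: "0 \<le> r" "r \<le> 1" using y unfolding r_def by auto
    have ee: "e \<bullet> e = 1" using e power2_norm_eq_inner[of e] by simp
    have "(norm (y - a *\<^sub>R e))\<^sup>2 = r\<^sup>2 - 2 * a * (y \<bullet> e) + a\<^sup>2"
      unfolding r_def power2_norm_eq_inner by (simp add: inner_diff_left inner_diff_right ee inner_commute algebra_simps power2_eq_square)
    also have "\<dots> \<le> r\<^sup>2 - 2 * a * (a * r) + a\<^sup>2"
      using y(2) a unfolding r_def by (simp add: mult_left_mono)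
    also have "\<dots> \<le> 1 - a\<^sup>2"
    proof -
      have "(r - 1) * (r + 1 - 2 * a\<^sup>2) \<le> 0"
        using r0 a2 by (intro mult_nonpos_nonneg) auto
      thus ?thesis by (simp add: algebra_simps power2_eq_square)
    qed
    finally have "(norm (y - a *\<^sub>R e))\<^sup>2 \<le> 1 - a\<^sup>2" .
    hence "norm (y - a *\<^sub>R e) \<le> sqrt (1 - a\<^sup>2)" using real_le_rsqrt by blast
    thus "y \<in> cball (a *\<^sub>R e) (sqrt (1 - a\<^sup>2))" by (simp add: dist_norm norm_minus_commute)
  qed
  have "emeasure lborel (Cn a e) \<le> emeasure lborel (cball (a *\<^sub>R e) (sqrt (1 - a\<^sup>2)))"
    by (rule emeasure_mono[OF sub]) simp
  also have "\<dots> = ennreal (unit_ball_vol (real CARD('k)) * sqrt (1 - a\<^sup>2) ^ CARD('k))"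
    using a2 by (subst emeasure_cball) auto
  also have "\<dots> = ennreal (sqrt (1 - a\<^sup>2) ^ CARD('k)) * emeasure lborel (ball (0::real^'k) 1)"
    using a2 by (simp add: emeasure_ball ennreal_mult mult.commute)
  finally show ?thesis .
qed




lemma post_le:
  fixes pr :: "'x measure" and K :: "'x \<Rightarrow> 'w measure" and SW :: "'w measure"
    and q :: "'w \<Rightarrow> 'z \<Rightarrow> real" and \<epsilon> :: real and z :: 'z
  assumes prior: "prob_space pr"
    and kern: "K \<in> pr \<rightarrow>\<^sub>M prob_algebra SW"
    and qm: "(\<lambda>w. q w z) \<in> borel_measurable SW"
    and ldp: "\<And>w w'. w \<in> space SW \<Longrightarrow> w' \<in> space SW \<Longrightarrow> q w z \<le> exp \<epsilon> * q w' z"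
    and B': "B' \<in> sets pr"
    and sub: "AE x in pr. x \<in> B \<longrightarrow> x \<in> B'"
  shows "post pr K q z B \<le> ennreal (exp \<epsilon>) * emeasure pr B'"
proof -
  interpret P: prob_space pr by (rule prior)
  define E where "E = ennreal (exp \<epsilon>)"
  define L where "L x = lik K q x z" for x
  have Kx: "prob_space (K x) \<and> sets (K x) = sets SW" if "x \<in> space pr" for x
    using measurable_space[OF kern that] by (simp add: space_prob_algebra)
  have sp: "space (K x) = space SW" if "x \<in> space pr" for x
    using Kx[OF that] sets_eq_imp_space_eq by blast
  have fm: "(\<lambda>w. ennreal (q w z)) \<in> borel_measurable SW" using qm by simp
  have fmK: "(\<lambda>w. ennreal (q w z)) \<in> borel_measurable (K x)" if "x \<in> space pr" for x
    using fm Kx[OF that] by (simp cong: measurable_cong_sets)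
  have Lm: "L \<in> borel_measurable pr"
    unfolding L_def lik_def
    using measurable_compose[OF measurable_prob_algebraD[OF kern] nn_integral_measurable_subprob_algebra[OF fm]]
    by simp
  have Q: "ennreal (q w z) \<le> E * ennreal (q w' z)" if "w \<in> space SW" "w' \<in> space SW" for w w'
  proof -
    have "ennreal (q w z) \<le> ennreal (exp \<epsilon> * q w' z)" using ldp[OF that] by (rule ennreal_leI)
    also have "\<dots> = E * ennreal (q w' z)" unfolding E_def by (rule ennreal_mult') simp
    finally show ?thesis .
  qed
  have const: "(\<integral>\<^sup>+ w. c \<partial>K x) = c" if "x \<in> space pr" for x c
  proof -
    interpret Q: prob_space "K x" using Kx[OF that] by simp
    show ?thesis by (simp add: Q.emeasure_space_1)
  qed
  have LL: "L x \<le> E * L x'" if x: "x \<in> space pr" and x': "x' \<in> space pr" for x x'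
  proof -
    have pt: "ennreal (q w z) \<le> E * L x'" if w: "w \<in> space SW" for w
    proof -
      have "ennreal (q w z) = (\<integral>\<^sup>+ w'. ennreal (q w z) \<partial>K x')" using const[OF x'] by simp
      also have "\<dots> \<le> (\<integral>\<^sup>+ w'. E * ennreal (q w' z) \<partial>K x')"
        by (intro nn_integral_mono) (use Q w sp[OF x'] in auto)
      also have "\<dots> = E * L x'" unfolding L_def lik_def
        by (rule nn_integral_cmult[OF fmK[OF x']])
      finally show ?thesis .
    qed
    have "L x = (\<integral>\<^sup>+ w. ennreal (q w z) \<partial>K x)" unfolding L_def lik_def ..
    also have "\<dots> \<le> (\<integral>\<^sup>+ w. E * L x' \<partial>K x)"
      by (intro nn_integral_mono) (use pt sp[OF x] in auto)
    also have "\<dots> = E * L x'" using const[OF x] by simp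
    finally show ?thesis .
  qed
  define Den where "Den = (\<integral>\<^sup>+ x. L x \<partial>pr)"
  define Num where "Num = (\<integral>\<^sup>+ x. indicator B x * L x \<partial>pr)"
  have LD: "L x \<le> E * Den" if x: "x \<in> space pr" for x
  proof -
    have "L x = (\<integral>\<^sup>+ x'. L x \<partial>pr)" by (simp add: P.emeasure_space_1)
    also have "\<dots> \<le> (\<integral>\<^sup>+ x'. E * L x' \<partial>pr)"
      by (intro nn_integral_mono LL x)
    also have "\<dots> = E * Den" unfolding Den_def by (rule nn_integral_cmult[OF Lm])
    finally show ?thesis .
  qed
  have AEb: "AE x in pr. indicator B x * L x \<le> indicator B' x * (E * Den)"
    using sub AE_space
  proof eventually_elim
    case (elim x)
    show ?case
    proof (cases "x \<in> B")
      case True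
      hence "x \<in> B'" using elim by simp
      thus ?thesis using True LD[OF elim(2)] by simp
    next
      case False
      thus ?thesis by simp
    qed
  qed
  have "Num \<le> (\<integral>\<^sup>+ x. indicator B' x * (E * Den) \<partial>pr)"
    unfolding Num_def by (rule nn_integral_mono_AE[OF AEb])
  also have "\<dots> = (\<integral>\<^sup>+ x. (E * Den) * indicator B' x \<partial>pr)"
    by (rule nn_integral_cong) (rule mult.commute)
  also have "\<dots> = E * Den * emeasure pr B'"
    by (rule nn_integral_cmult_indicator[OF B'])
  also have "E * Den * emeasure pr B' = Den * (E * emeasure pr B')" by (simp only: ac_simps)
  finally have NumD: "Num \<le> Den * (E * emeasure pr B')" .
  have "post pr K q z B = Num / Den" unfolding post_def Num_def Den_def L_def ..
  also have "\<dots> \<le> E * emeasure pr B'"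
  proof (cases "Den = 0")
    case True
    hence "Num = 0" using NumD by simp
    thus ?thesis by simp
  next
    case False
    hence "Den > 0" by (simp add: zero_less_iff_neq_zero)
    thus ?thesis using NumD by (rule divide_le_posI_ennreal)
  qed
  finally show ?thesis unfolding E_def .
qed




lemma dirmap_meas: "dirmap A \<in> borel_measurable (borel :: (real^'d) measure)"
proof -
  have [measurable]: "((*v) A) \<in> borel_measurable borel"
    by (intro borel_measurable_continuous_onI linear_continuous_on matrix_vector_mul_bounded_linear)
  show ?thesis unfolding dirmap_def[abs_def] by measurable
qed

lemma cap_unif:
  fixes e :: "real^'k" and a c :: real
  assumes e: "norm e = 1" and a: "0 < a" and c0: "c \<ge> 0"
    and capb: "emeasure lborel {y::real^'k. norm y \<le> 1 \<and> a * norm y \<le> y \<bullet> e} \<le> ennreal c * emeasure lborel (ball (0::real^'k) 1)"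
  shows "emeasure (uniform_measure lborel (ball (0::real^'k) 1)) {y. a \<le> (y /\<^sub>R norm y) \<bullet> e} \<le> ennreal c"
proof -
  let ?S = "{y::real^'k. a \<le> (y /\<^sub>R norm y) \<bullet> e}"
  let ?V = "emeasure lborel (ball (0::real^'k) 1)"
  have Sm: "?S \<in> sets lborel" by measurable
  have V: "?V = ennreal (unit_ball_vol (real CARD('k)))" using emeasure_ball[of 1 "0::real^'k"] by simp
  have up: "unit_ball_vol (real CARD('k)) > 0" by (rule unit_ball_vol_pos) simp
  have V0: "?V \<noteq> 0" "?V \<noteq> top" unfolding V using up by (auto simp del: unit_ball_vol_pos)
  have sub: "ball 0 1 \<inter> ?S \<subseteq> {y::real^'k. norm y \<le> 1 \<and> a * norm y \<le> y \<bullet> e}"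
  proof
    fix y :: "real^'k" assume y: "y \<in> ball 0 1 \<inter> ?S"
    hence y1: "norm y \<le> 1" and ya: "a \<le> (y /\<^sub>R norm y) \<bullet> e" by auto
    have "y \<noteq> 0" using ya a by (auto simp: inner_zero_left)
    hence np: "norm y > 0" by simp
    have "(y /\<^sub>R norm y) \<bullet> e = (y \<bullet> e) / norm y" by (simp add: inner_scaleR_left divide_inverse mult.commute)
    hence "a * norm y \<le> y \<bullet> e" using ya np by (simp add: pos_le_divide_eq)
    thus "y \<in> {y::real^'k. norm y \<le> 1 \<and> a * norm y \<le> y \<bullet> e}" using y1 by simp
  qed
  have "emeasure (uniform_measure lborel (ball (0::real^'k) 1)) ?S = emeasure lborel (ball 0 1 \<inter> ?S) / ?V"
    using Sm by (subst emeasure_uniform_measure) auto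
  also have "\<dots> \<le> emeasure lborel {y::real^'k. norm y \<le> 1 \<and> a * norm y \<le> y \<bullet> e} / ?V"
    by (intro divide_right_mono_ennreal emeasure_mono[OF sub]) measurable
  also have "\<dots> \<le> (ennreal c * ?V) / ?V"
    by (intro divide_right_mono_ennreal capb)
  also have "\<dots> = ennreal c" using V0 by (rule ennreal_mult_divide_eq)
  finally show ?thesis .
qed





lemma pr_cap:
  fixes A :: "real^'d^'k" and pr :: "(real^'d) measure" and g :: "real^'k \<Rightarrow> real" and e :: "real^'k"
  assumes sets_pr: "sets pr = sets borel"
    and gm: "g \<in> borel_measurable borel"
    and dist: "distr pr borel (dirmap A) = density sphere_unif (\<lambda>v. ennreal (g v))"
    and gb: "\<forall>v \<in> sphere 0 1. g v > 0 \<longrightarrow> ln (g v) \<le> \<rho>0"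
    and a: "0 < a"
  shows "emeasure pr {x \<in> space pr. a \<le> dirmap A x \<bullet> e}
     \<le> ennreal (exp \<rho>0) * emeasure (uniform_measure lborel (ball (0::real^'k) 1)) {y. a \<le> (y /\<^sub>R norm y) \<bullet> e}"
proof -
  let ?U = "uniform_measure lborel (ball (0::real^'k) 1)"
  let ?C = "{u::real^'k. a \<le> u \<bullet> e}"
  have dm: "dirmap A \<in> pr \<rightarrow>\<^sub>M borel"
    by (subst measurable_cong_sets[OF sets_pr refl]) (rule dirmap_meas)
  have Cm: "?C \<in> sets borel" by measurable
  have sU: "sets ?U = sets borel" by simp
  have nm: "(\<lambda>y::real^'k. y /\<^sub>R norm y) \<in> ?U \<rightarrow>\<^sub>M borel"
    by (subst measurable_cong_sets[OF sU refl]) measurable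
  have sS: "sets (sphere_unif :: (real^'k) measure) = sets borel" unfolding sphere_unif_def by simp
  have "emeasure pr {x \<in> space pr. a \<le> dirmap A x \<bullet> e} = emeasure (distr pr borel (dirmap A)) ?C"
    using dm Cm by (subst emeasure_distr) (auto simp: vimage_def Int_def conj_commute)
  also have "\<dots> = emeasure (density sphere_unif (\<lambda>v. ennreal (g v))) ?C" by (simp add: dist)
  also have "\<dots> = (\<integral>\<^sup>+ v. ennreal (g v) * indicator ?C v \<partial>sphere_unif)"
  proof (rule emeasure_density)
    show "(\<lambda>v. ennreal (g v)) \<in> borel_measurable sphere_unif"
      by (subst measurable_cong_sets[OF sS refl]) (use gm in measurable)
    show "?C \<in> sets sphere_unif" using Cm sS by simp
  qed
  also have "\<dots> = (\<integral>\<^sup>+ y. ennreal (g (y /\<^sub>R norm y)) * indicator ?C (y /\<^sub>R norm y) \<partial>?U)"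
    unfolding sphere_unif_def
  proof (rule nn_integral_distr[OF nm])
    show "(\<lambda>v. ennreal (g v) * indicator ?C v) \<in> borel_measurable (distr ?U borel (\<lambda>y. y /\<^sub>R norm y))"
      using gm Cm by measurable
  qed
  also have "\<dots> \<le> (\<integral>\<^sup>+ y. ennreal (exp \<rho>0) * indicator {y. a \<le> (y /\<^sub>R norm y) \<bullet> e} y \<partial>?U)"
  proof (intro nn_integral_mono)
    fix y :: "real^'k"
    show "ennreal (g (y /\<^sub>R norm y)) * indicator ?C (y /\<^sub>R norm y) \<le> ennreal (exp \<rho>0) * indicator {y. a \<le> (y /\<^sub>R norm y) \<bullet> e} y"
    proof (cases "a \<le> (y /\<^sub>R norm y) \<bullet> e")
      case True
      hence "y \<noteq> 0" using a by auto
      hence sph: "y /\<^sub>R norm y \<in> sphere 0 1" by simp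
      have "g (y /\<^sub>R norm y) \<le> exp \<rho>0"
      proof (cases "g (y /\<^sub>R norm y) > 0")
        case True
        hence "ln (g (y /\<^sub>R norm y)) \<le> \<rho>0" using gb sph by blast
        thus ?thesis using True by (metis exp_ln exp_le_cancel_iff)
      next
        case False
        thus ?thesis by (smt (verit) exp_gt_zero)
      qed
      thus ?thesis using True by (simp add: ennreal_leI)
    next
      case False
      thus ?thesis by simp
    qed
  qed
  also have "\<dots> = ennreal (exp \<rho>0) * emeasure ?U {y. a \<le> (y /\<^sub>R norm y) \<bullet> e}"
  proof (rule nn_integral_cmult_indicator)
    show "{y. a \<le> (y /\<^sub>R norm y) \<bullet> e} \<in> sets ?U" using sU by simp
  qed
  finally show ?thesis .
qed

lemma lrec_cap:
  fixes A :: "real^'d^'k" and v :: "real^'k"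
  assumes Ax: "A *v x \<noteq> 0" and v: "v \<noteq> 0" and L: "Lrec (dirmap A x) v \<le> sqrt (2 - 2 * a)" and a: "a < 1"
  shows "a \<le> dirmap A x \<bullet> (v /\<^sub>R norm v)"
proof -
  define u where "u = dirmap A x"
  define e where "e = v /\<^sub>R norm v"
  have nu: "norm u = 1" unfolding u_def dirmap_def using Ax by simp
  have ne: "norm e = 1" unfolding e_def using v by simp
  have uu: "u /\<^sub>R norm u = u" using nu by simp
  have L': "norm (u - e) \<le> sqrt (2 - 2 * a)"
    using L v unfolding Lrec_def u_def[symmetric] e_def[symmetric] uu by simp
  have "(norm (u - e))\<^sup>2 \<le> (sqrt (2 - 2 * a))\<^sup>2" using L' by (intro power_mono) auto
  also have "\<dots> = 2 - 2 * a" using a by simp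
  finally have n2: "(norm (u - e))\<^sup>2 \<le> 2 - 2 * a" .
  have "(norm (u - e))\<^sup>2 = u \<bullet> u - 2 * (u \<bullet> e) + e \<bullet> e"
    unfolding power2_norm_eq_inner by (simp add: inner_diff_left inner_diff_right inner_commute)
  also have "u \<bullet> u = 1" using nu power2_norm_eq_inner[of u] by simp
  also have "e \<bullet> e = 1" using ne power2_norm_eq_inner[of e] by simp
  finally have "1 - 2 * (u \<bullet> e) + 1 \<le> 2 - 2 * a" using n2 by simp
  hence "a \<le> u \<bullet> e" by simp
  thus ?thesis unfolding u_def e_def .
qed

lemma main_case:
  fixes A :: "real^'d^'k"
    and pr :: "(real^'d) measure"
    and SW :: "'w measure" and K :: "real^'d \<Rightarrow> 'w measure"
    and \<mu> :: "'z measure" and q :: "'w \<Rightarrow> 'z \<Rightarrow> real"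
    and \<epsilon> \<rho>0 a c :: real
  assumes prior: "prob_space pr" "sets pr = sets borel"
    and nz: "AE x in pr. A *v x \<noteq> 0"
    and dens: "\<exists>g \<in> borel_measurable borel. (\<forall>v. g v \<ge> 0) \<and>
                 distr pr borel (dirmap A) = density sphere_unif (\<lambda>v. ennreal (g v)) \<and>
                 (\<forall>v \<in> sphere 0 1. g v > 0 \<longrightarrow> ln (g v) \<le> \<rho>0)"
    and kern: "K \<in> pr \<rightarrow>\<^sub>M prob_algebra SW"
    and qmeas: "case_prod q \<in> borel_measurable (SW \<Otimes>\<^sub>M \<mu>)"
    and ldp: "\<And>w w' z. w \<in> space SW \<Longrightarrow> w' \<in> space SW \<Longrightarrow> z \<in> space \<mu> \<Longrightarrow>
                q w z \<le> exp \<epsilon> * q w' z"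
    and a: "0 < a" "a < 1" and c0: "c \<ge> 0"
    and capb: "\<And>e::real^'k. norm e = 1 \<Longrightarrow> emeasure lborel {y::real^'k. norm y \<le> 1 \<and> a * norm y \<le> y \<bullet> e}
                   \<le> ennreal c * emeasure lborel (ball (0::real^'k) 1)"
  shows "protected_rec pr K q \<mu> (dirmap A) Lrec (sqrt (2 - 2 * a)) (exp \<epsilon> * exp \<rho>0 * c)"
  unfolding protected_rec_def
proof (intro ballI)
  fix vh z assume vh: "vh \<in> \<mu> \<rightarrow>\<^sub>M (borel :: (real^'k) measure)" and z: "z \<in> space \<mu>"
  obtain g where gm: "g \<in> borel_measurable borel" and g0: "\<forall>v. g v \<ge> 0"
    and dist: "distr pr borel (dirmap A) = density sphere_unif (\<lambda>v. ennreal (g v))"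
    and gb: "\<forall>v \<in> sphere 0 1. g v > 0 \<longrightarrow> ln (g v) \<le> \<rho>0"
    using dens by blast
  have qm: "(\<lambda>w. q w z) \<in> borel_measurable SW"
    using measurable_compose[OF measurable_Pair2'[OF z] qmeas] by simp
  have ldpz: "\<And>w w'. w \<in> space SW \<Longrightarrow> w' \<in> space SW \<Longrightarrow> q w z \<le> exp \<epsilon> * q w' z"
    using ldp z by blast
  define B where "B = {x \<in> space pr. Lrec (dirmap A x) (vh z) \<le> sqrt (2 - 2 * a)}"
  have Ee: "ennreal (exp \<epsilon> * exp \<rho>0 * c) = ennreal (exp \<epsilon>) * (ennreal (exp \<rho>0) * ennreal c)"
    using c0 by (simp add: ennreal_mult mult.assoc)
  show "post pr K q z {x \<in> space pr. Lrec (dirmap A x) (vh z) \<le> sqrt (2 - 2 * a)} \<le> ennreal (exp \<epsilon> * exp \<rho>0 * c)"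
  proof (cases "vh z = 0")
    case True
    have "B = {}"
    proof -
      have "sqrt (2 - 2 * a) < sqrt 2" using a by simp
      thus ?thesis unfolding B_def Lrec_def using True by auto
    qed
    hence "post pr K q z B \<le> ennreal (exp \<epsilon>) * emeasure pr {}"
      by (intro post_le[where q=q and z=z and K=K and pr=pr and SW=SW and \<epsilon>=\<epsilon>, OF prior(1) kern qm ldpz]) auto
    thus ?thesis unfolding B_def[symmetric] by simp
  next
    case False
    define e where "e = vh z /\<^sub>R norm (vh z)"
    have ne: "norm e = 1" unfolding e_def using False by simp
    define B' where "B' = {x \<in> space pr. a \<le> dirmap A x \<bullet> e}"
    have B'm: "B' \<in> sets pr"
    proof -
      have dm: "dirmap A \<in> pr \<rightarrow>\<^sub>M borel"
        by (subst measurable_cong_sets[OF prior(2) refl]) (rule dirmap_meas)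
      show ?thesis unfolding B'_def using dm by measurable
    qed
    have sub: "AE x in pr. x \<in> B \<longrightarrow> x \<in> B'"
      using nz
    proof eventually_elim
      case (elim x)
      show ?case
      proof
        assume "x \<in> B"
        hence "x \<in> space pr" "Lrec (dirmap A x) (vh z) \<le> sqrt (2 - 2 * a)" unfolding B_def by auto
        moreover have "a \<le> dirmap A x \<bullet> e"
          unfolding e_def by (rule lrec_cap[OF elim False]) (use \<open>x \<in> B\<close> a in \<open>auto simp: B_def\<close>)
        ultimately show "x \<in> B'" unfolding B'_def by simp
      qed
    qed
    have "post pr K q z B \<le> ennreal (exp \<epsilon>) * emeasure pr B'"
      by (rule post_le[where q=q and z=z and K=K and pr=pr and SW=SW and \<epsilon>=\<epsilon>, OF prior(1) kern qm ldpz B'm sub])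
    also have "emeasure pr B' \<le> ennreal (exp \<rho>0) * emeasure (uniform_measure lborel (ball (0::real^'k) 1)) {y. a \<le> (y /\<^sub>R norm y) \<bullet> e}"
      unfolding B'_def by (rule pr_cap[OF prior(2) gm dist gb a(1)])
    also have "emeasure (uniform_measure lborel (ball (0::real^'k) 1)) {y. a \<le> (y /\<^sub>R norm y) \<bullet> e} \<le> ennreal c"
      by (rule cap_unif[OF ne a(1) c0 capb[OF ne]])
    finally have "post pr K q z B \<le> ennreal (exp \<epsilon>) * (ennreal (exp \<rho>0) * ennreal c)"
      by (simp add: mult_left_mono)
    thus ?thesis unfolding B_def[symmetric] Ee .
  qed
qed

lemma exp_sqrt_pow: "0 < t \<Longrightarrow> exp (real n / 2 * ln t) = sqrt t ^ n"
proof -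
  assume t: "0 < t"
  have "sqrt t ^ n = exp (ln (sqrt t)) ^ n" using t by simp
  also have "\<dots> = exp (real n * ln (sqrt t))" by (rule exp_of_nat_mult[symmetric])
  also have "ln (sqrt t) = ln t / 2" using t by (simp add: ln_sqrt)
  finally show ?thesis by simp
qed

theorem proposition2p3:
  fixes A :: "real^'d^'k"
    and pr :: "(real^'d) measure"
    and SW :: "'w measure" and K :: "real^'d \<Rightarrow> 'w measure"
    and \<mu> :: "'z measure" and q :: "'w \<Rightarrow> 'z \<Rightarrow> real"
    and \<epsilon> \<rho>0 a :: real
  assumes k4: "CARD('k) \<ge> 4"
    and dk: "CARD('d) \<ge> CARD('k)"
    and orth: "A ** transpose A = mat 1"
    and prior: "prob_space pr" "sets pr = sets borel"
    and nz: "AE x in pr. A *v x \<noteq> 0"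
    and rho0: "\<rho>0 \<ge> 0"
    and dens: "\<exists>g \<in> borel_measurable borel. (\<forall>v. g v \<ge> 0) \<and>
                 distr pr borel (dirmap A) = density sphere_unif (\<lambda>v. ennreal (g v)) \<and>
                 (\<forall>v \<in> sphere 0 1. g v > 0 \<longrightarrow> ln (g v) \<le> \<rho>0)"
    and kern: "K \<in> pr \<rightarrow>\<^sub>M prob_algebra SW"
    and sfin: "sigma_finite_measure \<mu>"
    and qmeas: "case_prod q \<in> borel_measurable (SW \<Otimes>\<^sub>M \<mu>)"
    and qnn: "\<And>w z. w \<in> space SW \<Longrightarrow> z \<in> space \<mu> \<Longrightarrow> q w z \<ge> 0"
    and qprob: "\<And>w. w \<in> space SW \<Longrightarrow> (\<integral>\<^sup>+ z. ennreal (q w z) \<partial>\<mu>) = 1"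
    and ldp: "\<And>w w' z. w \<in> space SW \<Longrightarrow> w' \<in> space SW \<Longrightarrow> z \<in> space \<mu> \<Longrightarrow>
                q w z \<le> exp \<epsilon> * q w' z"
  shows "(a \<in> {0 .. 1 / sqrt 2} \<longrightarrow>
            protected_rec pr K q \<mu> (dirmap A) Lrec (sqrt (2 - 2 * a))
              (exp (\<epsilon> + \<rho>0 + real CARD('k) / 2 * ln (1 - a\<^sup>2)))) \<and>
         (a \<in> {sqrt (2 / real CARD('k)) ..< 1} \<longrightarrow>
            protected_rec pr K q \<mu> (dirmap A) Lrec (sqrt (2 - 2 * a))
              (exp (\<epsilon> + \<rho>0 + (real CARD('k) - 1) / 2 * ln (1 - a\<^sup>2)
                    - ln (2 * a * sqrt (real CARD('k))))))"
proof -
  have k2: "CARD('k) \<ge> 2" using k4 by simp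
  have P1: "protected_rec pr K q \<mu> (dirmap A) Lrec (sqrt (2 - 2 * a))
              (exp (\<epsilon> + \<rho>0 + real CARD('k) / 2 * ln (1 - a\<^sup>2)))" if ai: "a \<in> {0 .. 1 / sqrt 2}"
  proof (cases "a = 0")
    case True
    show ?thesis
      unfolding protected_rec_def
    proof (intro ballI)
      fix vh z assume z: "z \<in> space \<mu>"
      have qm: "(\<lambda>w. q w z) \<in> borel_measurable SW"
        using measurable_compose[OF measurable_Pair2'[OF z] qmeas] by simp
      have ldpz: "\<And>w w'. w \<in> space SW \<Longrightarrow> w' \<in> space SW \<Longrightarrow> q w z \<le> exp \<epsilon> * q w' z"
        using ldp z by blast
      have "post pr K q z {x \<in> space pr. Lrec (dirmap A x) (vh z) \<le> sqrt (2 - 2 * a)} \<le> ennreal (exp \<epsilon>) * emeasure pr (space pr)"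
        by (rule post_le[where q=q and z=z and K=K and pr=pr and SW=SW and \<epsilon>=\<epsilon>, OF prior(1) kern qm ldpz]) auto
      also have "emeasure pr (space pr) = 1" using prior(1) by (simp add: prob_space.emeasure_space_1)
      also have "ennreal (exp \<epsilon>) * 1 \<le> ennreal (exp (\<epsilon> + \<rho>0 + real CARD('k) / 2 * ln (1 - a\<^sup>2)))"
        using True rho0 by (simp add: ennreal_leI)
      finally show "post pr K q z {x \<in> space pr. Lrec (dirmap A x) (vh z) \<le> sqrt (2 - 2 * a)}
          \<le> ennreal (exp (\<epsilon> + \<rho>0 + real CARD('k) / 2 * ln (1 - a\<^sup>2)))" .
    qed
  next
    case False
    hence a0: "0 < a" using ai by simp
    have h1: "1 / sqrt 2 < (1::real)" by (simp add: divide_less_eq)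
    have h2: "a \<le> 1 / sqrt 2" using ai by simp
    have a1: "a < 1" using h1 h2 by linarith
    have a2: "a\<^sup>2 < 1" using a0 a1 by (simp add: power_less_one_iff abs_less_iff)
    have c0: "sqrt (1 - a\<^sup>2) ^ CARD('k) \<ge> 0" using a2 by simp
    have "protected_rec pr K q \<mu> (dirmap A) Lrec (sqrt (2 - 2 * a)) (exp \<epsilon> * exp \<rho>0 * sqrt (1 - a\<^sup>2) ^ CARD('k))"
      by (rule main_case[OF prior nz dens kern qmeas ldp a0 a1 c0])
         (use cap_vol_i[of _ a] ai in \<open>auto simp: Cn_def\<close>)
    moreover have "exp (\<epsilon> + \<rho>0 + real CARD('k) / 2 * ln (1 - a\<^sup>2)) = exp \<epsilon> * exp \<rho>0 * sqrt (1 - a\<^sup>2) ^ CARD('k)"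
      using exp_sqrt_pow[of "1 - a\<^sup>2" "CARD('k)"] a2 by (simp add: exp_add)
    ultimately show ?thesis by simp
  qed
  have P2: "protected_rec pr K q \<mu> (dirmap A) Lrec (sqrt (2 - 2 * a))
              (exp (\<epsilon> + \<rho>0 + (real CARD('k) - 1) / 2 * ln (1 - a\<^sup>2)
                    - ln (2 * a * sqrt (real CARD('k)))))" if aii: "a \<in> {sqrt (2 / real CARD('k)) ..< 1}"
  proof -
    have h1: "sqrt (2 / real CARD('k)) > 0" by simp
    have h2: "sqrt (2 / real CARD('k)) \<le> a" using aii by simp
    have a0: "0 < a" using h1 h2 by linarith
    have a1: "a < 1" using aii by simp
    have a2: "a\<^sup>2 < 1" using a0 a1 by (simp add: power_less_one_iff abs_less_iff)
    define c where "c = sqrt (1 - a\<^sup>2) ^ (CARD('k) - 1) / (2 * a * sqrt (real CARD('k)))"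
    have c0: "c \<ge> 0" unfolding c_def using a2 a0 by simp
    have "protected_rec pr K q \<mu> (dirmap A) Lrec (sqrt (2 - 2 * a)) (exp \<epsilon> * exp \<rho>0 * c)"
      by (rule main_case[OF prior nz dens kern qmeas ldp a0 a1 c0])
         (use cap_vol_ii[of _ a, OF _ a0 a1 k2] in \<open>auto simp: Cn_def c_def\<close>)
    moreover have "exp (\<epsilon> + \<rho>0 + (real CARD('k) - 1) / 2 * ln (1 - a\<^sup>2) - ln (2 * a * sqrt (real CARD('k))))
        = exp \<epsilon> * exp \<rho>0 * c"
    proof -
      have r: "real CARD('k) - 1 = real (CARD('k) - 1)" using k2 by simp
      have pos: "2 * a * sqrt (real CARD('k)) > 0" using a0 by simp
      have "exp (\<epsilon> + \<rho>0 + (real CARD('k) - 1) / 2 * ln (1 - a\<^sup>2) - ln (2 * a * sqrt (real CARD('k))))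
          = exp \<epsilon> * exp \<rho>0 * exp (real (CARD('k) - 1) / 2 * ln (1 - a\<^sup>2)) / exp (ln (2 * a * sqrt (real CARD('k))))"
        unfolding r by (simp add: exp_add exp_diff)
      also have "\<dots> = exp \<epsilon> * exp \<rho>0 * c"
        unfolding c_def using exp_sqrt_pow[of "1 - a\<^sup>2" "CARD('k) - 1"] a2 pos by simp
      finally show ?thesis .
    qed
    ultimately show ?thesis by simp
  qed
  show ?thesis using P1 P2 by blast
qed


end
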